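(* Let $0<\gamma\le1$, $0<\delta<1$, $\delta<\alpha<1$, $\Lambda_1=(0,1)$, and $P_\delta(t,z)=\frac{1}{\Gamma(1-\delta)}(t^{1/\gamma}-z^{1/\gamma})^{-\delta}$ for $0<z<t$. Let $\omega_1(t)=(1-t)^{\alpha/2}t^{1/\gamma-1/2}$ and $\omega_2(t)=(1-t)^{(1-\alpha)/2}$ for $t\in\Lambda_1$. Then for any differentiable function $v$ on $\Lambda_1$, $$\int_{\Lambda_1}\big|\omega_1(t)(P_\delta v')(t)\big|^2dt\le c\int_{\Lambda_1}\big|\omega_2(t)v'(t)\big|^2dt,$$ where $(P_\delta v')(t)=\int_0^tP_\delta(t,z)v'(z)\,dz$ and $c$ is independent of $v$. *)

theory Defs
  imports "HOL-Analysis.Analysis"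
begin

definition P_kernel :: "real \<Rightarrow> real \<Rightarrow> real \<Rightarrow> real \<Rightarrow> real" where
  "P_kernel \<gamma> \<delta> t z = (t powr (1/\<gamma>) - z powr (1/\<gamma>)) powr (-\<delta>) / Gamma (1 - \<delta>)"

definition P_op :: "real \<Rightarrow> real \<Rightarrow> (real \<Rightarrow> real) \<Rightarrow> real \<Rightarrow> real" where
  "P_op \<gamma> \<delta> w t = (LINT z:{0<..<t}|lborel. P_kernel \<gamma> \<delta> t z * w z)"

definition omega1 :: "real \<Rightarrow> real \<Rightarrow> real \<Rightarrow> real" where
  "omega1 \<gamma> \<alpha> t = (1 - t) powr (\<alpha>/2) * t powr (1/\<gamma> - 1/2)"

definition omega2 :: "real \<Rightarrow> real \<Rightarrow> real" where
  "omega2 \<alpha> t = (1 - t) powr ((1 - \<alpha>)/2)"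

end

theory Submission
  imports Defs
begin


lemma powr_int0:
  assumes "a > -1" "0 \<le> L"
  shows "(\<integral>\<^sup>+x. ennreal (indicator {0..L} x * x powr a) \<partial>lborel) = ennreal (L powr (a+1)/(a+1))"
proof -
  show ?thesis
    by (rule nn_integral_has_integral_lebesgue) (use has_integral_powr_from_0[OF assms] in auto)
qed

lemma powr_int_left:
  assumes "a > -1" "c \<le> d"
  shows "(\<integral>\<^sup>+x. ennreal (indicator {c<..<d} x * (x - c) powr a) \<partial>lborel) \<le> ennreal ((d-c) powr (a+1)/(a+1))"
proof -
  have "(\<integral>\<^sup>+x. ennreal (indicator {c<..<d} x * (x - c) powr a) \<partial>lborel)
     = (\<integral>\<^sup>+x. ennreal (indicator {c<..<d} (c + 1 * x) * ((c + 1*x) - c) powr a) \<partial>lborel)"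
    using nn_integral_real_affine[where c=1 and t=c and f="\<lambda>x. ennreal (indicator {c<..<d} x * (x - c) powr a)"] by simp
  also have "\<dots> \<le> (\<integral>\<^sup>+x. ennreal (indicator {0..d-c} x * x powr a) \<partial>lborel)"
    by (auto intro!: nn_integral_mono simp: indicator_def)
  also have "\<dots> = ennreal ((d-c) powr (a+1)/(a+1))"
    using assms by (intro powr_int0) auto
  finally show ?thesis .
qed

lemma powr_int_right:
  assumes "a > -1" "c \<le> d"
  shows "(\<integral>\<^sup>+x. ennreal (indicator {c<..<d} x * (d - x) powr a) \<partial>lborel) \<le> ennreal ((d-c) powr (a+1)/(a+1))"
proof -
  have "(\<integral>\<^sup>+x. ennreal (indicator {c<..<d} x * (d - x) powr a) \<partial>lborel)
     = (\<integral>\<^sup>+x. ennreal (indicator {c<..<d} (d + (-1) * x) * (d - (d + (-1)*x)) powr a) \<partial>lborel)"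
    using nn_integral_real_affine[where c="-1" and t=d and f="\<lambda>x. ennreal (indicator {c<..<d} x * (d - x) powr a)"] by simp
  also have "\<dots> \<le> (\<integral>\<^sup>+x. ennreal (indicator {0..d-c} x * x powr a) \<partial>lborel)"
    by (auto intro!: nn_integral_mono simp: indicator_def)
  also have "\<dots> = ennreal ((d-c) powr (a+1)/(a+1))"
    using assms by (intro powr_int0) auto
  finally show ?thesis .
qed

lemma deriv_meas:
  fixes v v' :: "real \<Rightarrow> real"
  assumes D: "\<forall>t\<in>{0<..<1}. (v has_real_derivative v' t) (at t)"
  shows "(\<lambda>t. indicator {0<..<1} t * v' t) \<in> borel_measurable borel"
proof -
  define vt where "vt = (\<lambda>x. indicator {0<..<1} x *\<^sub>R v x)"
  have "continuous_on {0<..<1} v"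
    using D by (intro continuous_at_imp_continuous_on) (auto intro: DERIV_continuous)
  then have [measurable]: "vt \<in> borel_measurable borel"
    unfolding vt_def by (intro borel_measurable_continuous_on_indicator) auto
  define g where "g = (\<lambda>n x. indicator {0<..<1} x * ((vt (x + 1/real (Suc n)) - vt x) / (1/real (Suc n))))"
  have [measurable]: "g n \<in> borel_measurable borel" for n
    unfolding g_def by measurable
  show ?thesis
  proof (rule borel_measurable_LIMSEQ_real[where u=g])
    fix x :: real
    show "(\<lambda>n. g n x) \<longlonglongrightarrow> indicator {0<..<1} x * v' x"
    proof (cases "x \<in> {0<..<1}")
      case False then show ?thesis by (simp add: g_def)
    next
      case True
      have h0: "(\<lambda>n. 1/real (Suc n)) \<longlonglongrightarrow> 0"
        using LIMSEQ_inverse_real_of_nat by (simp add: inverse_eq_divide)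
      have hat: "filterlim (\<lambda>n. 1/real (Suc n)) (at 0) sequentially"
        using h0 by (intro filterlim_atI) auto
      have "((\<lambda>h. (v (x + h) - v x) / h) \<longlongrightarrow> v' x) (at 0)"
        using D True by (simp add: DERIV_def)
      then have L: "(\<lambda>n. (v (x + 1/real (Suc n)) - v x) / (1/real (Suc n))) \<longlonglongrightarrow> v' x"
        by (rule filterlim_compose[OF _ hat])
      have "eventually (\<lambda>n. x + 1/real (Suc n) < 1) sequentially"
        proof -
        have "eventually (\<lambda>n. 1/real (Suc n) < 1 - x) sequentially"
          using h0 True unfolding order_tendsto_iff by auto
        then show ?thesis by eventually_elim auto
      qed
      then have "eventually (\<lambda>n. (v (x + 1/real (Suc n)) - v x) / (1/real (Suc n)) = g n x) sequentially"
      proof eventually_elim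
        case (elim n)
        have "0 < x + 1/real (Suc n)" using True by (intro add_pos_pos) auto
        then show ?case using elim True by (auto simp: g_def vt_def indicator_def)
      qed
      with L have "(\<lambda>n. g n x) \<longlonglongrightarrow> v' x" by (rule Lim_transform_eventually)
      then show ?thesis using True by simp
    qed
  qed simp
qed


lemma CS_step:
  fixes W :: "real \<Rightarrow> real"
  assumes [measurable]: "W \<in> borel_measurable borel"
    and t: "0 < t" "t < 1" and ad: "0 < \<delta>" "\<delta> < \<alpha>" "\<alpha> < 1"
  shows "(\<integral>\<^sup>+z. ennreal (indicator {0<..<t} z * (t - z) powr (-\<delta>) * \<bar>W z\<bar>) \<partial>lborel)\<^sup>2
     \<le> (\<integral>\<^sup>+z. ennreal (1/(\<alpha>-\<delta>) * (indicator {0<..<t} z * (t-z) powr (-\<delta>) * (1-z) powr (1-\<alpha>) * (W z)\<^sup>2)) \<partial>lborel)"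
proof -
  define f where "f = (\<lambda>z. ennreal (sqrt (indicator {0<..<t} z * (t-z) powr (-\<delta>) * (1-z) powr (\<alpha>-1))))"
  define g where "g = (\<lambda>z. ennreal (sqrt (indicator {0<..<t} z * (t-z) powr (-\<delta>) * (1-z) powr (1-\<alpha>)) * \<bar>W z\<bar>))"
  have [measurable]: "f \<in> borel_measurable borel" "g \<in> borel_measurable borel"
    unfolding f_def g_def by measurable
  have fg: "(\<integral>\<^sup>+z. ennreal (indicator {0<..<t} z * (t - z) powr (-\<delta>) * \<bar>W z\<bar>) \<partial>lborel)
      = (\<integral>\<^sup>+z. f z * g z \<partial>lborel)"
  proof (intro nn_integral_cong)
    fix z :: real
    show "ennreal (indicator {0<..<t} z * (t - z) powr (-\<delta>) * \<bar>W z\<bar>) = f z * g z"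
    proof (cases "z \<in> {0<..<t}")
      case True
      then have z1: "0 < 1 - z" using t by auto
      have "(1-z) powr (\<alpha>-1) * (1-z) powr (1-\<alpha>) = 1"
        using z1 by (simp add: powr_add[symmetric])
      then have "sqrt ((t-z) powr (-\<delta>) * (1-z) powr (\<alpha>-1)) * sqrt ((t-z) powr (-\<delta>) * (1-z) powr (1-\<alpha>))
          = (t - z) powr (-\<delta>)"
        by (simp add: real_sqrt_mult[symmetric] algebra_simps)
      then show ?thesis using True
        by (simp add: f_def g_def ennreal_mult[symmetric] mult.assoc)
    qed (simp add: f_def g_def)
  qed
  have f2: "(\<integral>\<^sup>+z. f z ^ 2 \<partial>lborel) \<le> ennreal (1/(\<alpha>-\<delta>))"
  proof -
    have "(\<integral>\<^sup>+z. f z ^ 2 \<partial>lborel) \<le> (\<integral>\<^sup>+z. ennreal (indicator {0<..<t} z * (t - z) powr (\<alpha>-\<delta>-1)) \<partial>lborel)"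
    proof (intro nn_integral_mono)
      fix z :: real
      show "f z ^ 2 \<le> ennreal (indicator {0<..<t} z * (t - z) powr (\<alpha>-\<delta>-1))"
      proof (cases "z \<in> {0<..<t}")
        case True
        then have "(1-z) powr (\<alpha>-1) \<le> (t-z) powr (\<alpha>-1)"
          using ad t by (intro powr_mono2') auto
        then have "(t-z) powr (-\<delta>) * (1-z) powr (\<alpha>-1) \<le> (t-z) powr (-\<delta>) * (t-z) powr (\<alpha>-1)"
          by (intro mult_left_mono) auto
        also have "\<dots> = (t - z) powr (\<alpha>-\<delta>-1)"
          using True by (simp add: powr_add[symmetric] algebra_simps)
        finally show ?thesis using True
          by (simp add: f_def ennreal_power)
      qed (simp add: f_def)
    qed
    also have "\<dots> \<le> ennreal ((t - 0) powr (\<alpha>-\<delta>-1+1)/(\<alpha>-\<delta>-1+1))"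
      using ad t by (intro powr_int_right) auto
    also have "\<dots> \<le> ennreal (1/(\<alpha>-\<delta>))"
    proof (intro ennreal_leI)
      have "t powr (\<alpha> - \<delta>) \<le> 1" using ad t by (intro powr_le1) auto
      then show "(t - 0) powr (\<alpha> - \<delta> - 1 + 1) / (\<alpha> - \<delta> - 1 + 1) \<le> 1 / (\<alpha> - \<delta>)"
        using ad by (simp add: divide_right_mono)
    qed
    finally show ?thesis .
  qed
  have g2: "(\<integral>\<^sup>+z. g z ^ 2 \<partial>lborel) = (\<integral>\<^sup>+z. ennreal (indicator {0<..<t} z * (t-z) powr (-\<delta>) * (1-z) powr (1-\<alpha>) * (W z)\<^sup>2) \<partial>lborel)"
  proof (intro nn_integral_cong)
    fix z :: real
    show "g z ^ 2 = ennreal (indicator {0<..<t} z * (t-z) powr (-\<delta>) * (1-z) powr (1-\<alpha>) * (W z)\<^sup>2)"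
      unfolding g_def by (subst ennreal_power) (auto simp: power_mult_distrib indicator_def)
  qed
  have "(\<integral>\<^sup>+z. ennreal (indicator {0<..<t} z * (t - z) powr (-\<delta>) * \<bar>W z\<bar>) \<partial>lborel)\<^sup>2
      \<le> (\<integral>\<^sup>+z. f z ^ 2 \<partial>lborel) * (\<integral>\<^sup>+z. g z ^ 2 \<partial>lborel)"
    unfolding fg by (rule Cauchy_Schwarz_nn_integral) auto
  also have "\<dots> \<le> ennreal (1/(\<alpha>-\<delta>)) * (\<integral>\<^sup>+z. g z ^ 2 \<partial>lborel)"
    by (intro mult_right_mono f2) auto
  also have "\<dots> = (\<integral>\<^sup>+z. ennreal (1/(\<alpha>-\<delta>)) * ennreal (indicator {0<..<t} z * (t-z) powr (-\<delta>) * (1-z) powr (1-\<alpha>) * (W z)\<^sup>2) \<partial>lborel)"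
    unfolding g2 by (rule nn_integral_cmult[symmetric]) measurable
  also have "\<dots> = (\<integral>\<^sup>+z. ennreal (1/(\<alpha>-\<delta>) * (indicator {0<..<t} z * (t-z) powr (-\<delta>) * (1-z) powr (1-\<alpha>) * (W z)\<^sup>2)) \<partial>lborel)"
    using ad by (intro nn_integral_cong) (subst ennreal_mult[symmetric], auto)
  finally show ?thesis .
qed


lemma Fub_step:
  fixes W :: "real \<Rightarrow> real"
  assumes [measurable]: "W \<in> borel_measurable borel"
    and d: "0 < \<delta>" "\<delta> < 1" and C: "C \<ge> 0"
  shows "(\<integral>\<^sup>+t. ennreal (indicator {0<..<1} t) * (\<integral>\<^sup>+z. ennreal (C * (indicator {0<..<t} z * (t-z) powr (-\<delta>) * (1-z) powr (1-\<alpha>) * (W z)\<^sup>2)) \<partial>lborel) \<partial>lborel)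
     \<le> ennreal (C/(1-\<delta>)) * (\<integral>\<^sup>+z. ennreal (indicator {0<..<1} z * (1-z) powr (1-\<alpha>) * (W z)\<^sup>2) \<partial>lborel)"
proof -
  define F where "F = (\<lambda>t z. ennreal (if 0 < z \<and> z < t \<and> t < 1 then C * ((t-z) powr (-\<delta>) * (1-z) powr (1-\<alpha>) * (W z)^2) else 0))"
  have Fm: "case_prod (\<lambda>x y. F y x) \<in> borel_measurable (lborel \<Otimes>\<^sub>M lborel)"
    unfolding F_def by measurable
  have "(\<integral>\<^sup>+t. ennreal (indicator {0<..<1} t) * (\<integral>\<^sup>+z. ennreal (C * (indicator {0<..<t} z * (t-z) powr (-\<delta>) * (1-z) powr (1-\<alpha>) * (W z)\<^sup>2)) \<partial>lborel) \<partial>lborel)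
      = (\<integral>\<^sup>+t. (\<integral>\<^sup>+z. F t z \<partial>lborel) \<partial>lborel)"
  proof (intro nn_integral_cong)
    fix t :: real
    have "ennreal (indicator {0<..<1} t) * (\<integral>\<^sup>+z. ennreal (C * (indicator {0<..<t} z * (t-z) powr (-\<delta>) * (1-z) powr (1-\<alpha>) * (W z)\<^sup>2)) \<partial>lborel)
       = (\<integral>\<^sup>+z. ennreal (indicator {0<..<1} t) * ennreal (C * (indicator {0<..<t} z * (t-z) powr (-\<delta>) * (1-z) powr (1-\<alpha>) * (W z)\<^sup>2)) \<partial>lborel)"
      by (rule nn_integral_cmult[symmetric]) measurable
    also have "\<dots> = (\<integral>\<^sup>+z. F t z \<partial>lborel)"
      by (intro nn_integral_cong) (auto simp: F_def indicator_def)
    finally show "ennreal (indicator {0<..<1} t) * (\<integral>\<^sup>+z. ennreal (C * (indicator {0<..<t} z * (t-z) powr (-\<delta>) * (1-z) powr (1-\<alpha>) * (W z)\<^sup>2)) \<partial>lborel)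
       = (\<integral>\<^sup>+z. F t z \<partial>lborel)" .
  qed
  also have "\<dots> = (\<integral>\<^sup>+z. (\<integral>\<^sup>+t. F t z \<partial>lborel) \<partial>lborel)"
    using lborel_pair.Fubini'[OF Fm] by simp
  also have "\<dots> \<le> (\<integral>\<^sup>+z. ennreal (C/(1-\<delta>)) * ennreal (indicator {0<..<1} z * (1-z) powr (1-\<alpha>) * (W z)\<^sup>2) \<partial>lborel)"
  proof (intro nn_integral_mono)
    fix z :: real
    show "(\<integral>\<^sup>+t. F t z \<partial>lborel) \<le> ennreal (C/(1-\<delta>)) * ennreal (indicator {0<..<1} z * (1-z) powr (1-\<alpha>) * (W z)\<^sup>2)"
    proof (cases "z \<in> {0<..<1}")
      case False
      then have "F t z = 0" for t by (auto simp: F_def)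
      then show ?thesis by simp
    next
      case True
      define K where "K = C * ((1-z) powr (1-\<alpha>) * (W z)^2)"
      have K: "K \<ge> 0" using C by (auto simp: K_def)
      have "(\<integral>\<^sup>+t. F t z \<partial>lborel) = (\<integral>\<^sup>+t. ennreal K * ennreal (indicator {z<..<1} t * (t - z) powr (-\<delta>)) \<partial>lborel)"
        using True K by (intro nn_integral_cong) (auto simp: F_def K_def indicator_def ennreal_mult[symmetric] algebra_simps)
      also have "\<dots> = ennreal K * (\<integral>\<^sup>+t. ennreal (indicator {z<..<1} t * (t - z) powr (-\<delta>)) \<partial>lborel)"
        by (rule nn_integral_cmult) measurable
      also have "\<dots> \<le> ennreal K * ennreal ((1-z) powr (-\<delta>+1)/(-\<delta>+1))"
        using True d by (intro mult_left_mono powr_int_left) auto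
      also have "\<dots> \<le> ennreal K * ennreal (1/(1-\<delta>))"
      proof (intro mult_left_mono ennreal_leI)
        have "(1-z) powr (1-\<delta>) \<le> 1" using True d by (intro powr_le1) auto
        then show "(1-z) powr (-\<delta>+1)/(-\<delta>+1) \<le> 1/(1-\<delta>)"
          using d by (simp add: divide_right_mono)
      qed auto
      also have "\<dots> = ennreal (C/(1-\<delta>)) * ennreal (indicator {0<..<1} z * (1-z) powr (1-\<alpha>) * (W z)\<^sup>2)"
        using True C d K by (simp add: K_def ennreal_mult[symmetric])
      finally show ?thesis .
    qed
  qed
  also have "\<dots> = ennreal (C/(1-\<delta>)) * (\<integral>\<^sup>+z. ennreal (indicator {0<..<1} z * (1-z) powr (1-\<alpha>) * (W z)\<^sup>2) \<partial>lborel)"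
    by (rule nn_integral_cmult) measurable
  finally show ?thesis .
qed


lemma kernel_bound:
  assumes g: "0 < \<gamma>" "\<gamma> \<le> 1" and d: "0 < \<delta>" "\<delta> < 1" and z: "0 < z" "z < t"
  shows "0 \<le> P_kernel \<gamma> \<delta> t z \<and> P_kernel \<gamma> \<delta> t z \<le> t powr (-(1/\<gamma>-1)*\<delta>) * (t-z) powr (-\<delta>) / Gamma (1-\<delta>)"
proof -
  define p where "p = 1/\<gamma>"
  have p1: "p \<ge> 1" using g by (simp add: p_def)
  have G: "Gamma (1-\<delta>) > 0" using d by (intro Gamma_real_pos) auto
  have t: "0 < t" using z by auto
  have zp: "z powr (p-1) \<le> t powr (p-1)" using z p1 by (intro powr_mono2) auto
  have tp: "t powr p = t * t powr (p-1)" using t by (simp add: powr_mult_base)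
  have zp': "z powr p = z * z powr (p-1)" using z by (simp add: powr_mult_base)
  have B: "0 < t powr (p-1) * (t - z)" using z t by auto
  have BA: "t powr (p-1) * (t - z) \<le> t powr p - z powr p"
    unfolding tp zp' using zp z by (simp add: algebra_simps mult_left_mono)
  have "(t powr p - z powr p) powr (-\<delta>) \<le> (t powr (p-1) * (t - z)) powr (-\<delta>)"
    using B BA d by (intro powr_mono2') auto
  also have "\<dots> = t powr (-(p-1)*\<delta>) * (t-z) powr (-\<delta>)"
  proof -
    have "(t powr (p-1) * (t - z)) powr (-\<delta>) = (t powr (p-1)) powr (-\<delta>) * (t - z) powr (-\<delta>)"
      using t z by (simp add: powr_mult)
    also have "(t powr (p-1)) powr (-\<delta>) = t powr (-(p-1)*\<delta>)"
      by (simp add: powr_powr algebra_simps)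
    finally show ?thesis .
  qed
  finally have "(t powr p - z powr p) powr (-\<delta>) \<le> t powr (-(p-1)*\<delta>) * (t-z) powr (-\<delta>)" .
  then show ?thesis using G unfolding P_kernel_def p_def[symmetric]
    by (auto simp: divide_right_mono)
qed

lemma omega_bound:
  assumes g: "0 < \<gamma>" "\<gamma> \<le> 1" and d: "0 < \<delta>" "\<delta> < 1" and a: "0 < \<alpha>" and t: "0 < t" "t < 1"
  shows "0 \<le> omega1 \<gamma> \<alpha> t * t powr (-(1/\<gamma>-1)*\<delta>) \<and> omega1 \<gamma> \<alpha> t * t powr (-(1/\<gamma>-1)*\<delta>) \<le> 1"
proof -
  define p where "p = 1/\<gamma>"
  have p1: "p \<ge> 1" using g by (simp add: p_def)
  have e: "t powr (p - 1/2) * t powr (-(p-1)*\<delta>) = t powr ((p-1)*(1-\<delta>) + 1/2)"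
    using t by (simp add: powr_add[symmetric] algebra_simps)
  have "t powr ((p-1)*(1-\<delta>) + 1/2) \<le> 1"
    using t p1 d by (intro powr_le1) auto
  moreover have "(1-t) powr (\<alpha>/2) \<le> 1" using t a by (intro powr_le1) auto
  ultimately have "(1-t) powr (\<alpha>/2) * (t powr (p - 1/2) * t powr (-(p-1)*\<delta>)) \<le> 1 * 1"
    unfolding e by (intro mult_mono) auto
  then show ?thesis unfolding omega1_def p_def[symmetric] by (simp add: mult.assoc)
qed


theorem lemma3p3:
  fixes \<gamma> \<delta> \<alpha> :: real
  assumes "0 < \<gamma>" "\<gamma> \<le> 1" "0 < \<delta>" "\<delta> < 1" "\<delta> < \<alpha>" "\<alpha> < 1"
  shows "\<exists>c>0. \<forall>v v' :: real \<Rightarrow> real.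
           (\<forall>t\<in>{0<..<1}. (v has_real_derivative v' t) (at t)) \<longrightarrow>
           ((\<integral>\<^sup>+ t\<in>{0<..<1}. ennreal (\<bar>omega2 \<alpha> t * v' t\<bar>\<^sup>2) \<partial>lborel) < \<infinity> \<longrightarrow>
              (AE t in lborel. t \<in> {0<..<1} \<longrightarrow>
                 set_integrable lborel {0<..<t} (\<lambda>z. P_kernel \<gamma> \<delta> t z * v' z)))
           \<and> (\<integral>\<^sup>+ t\<in>{0<..<1}. ennreal (\<bar>omega1 \<gamma> \<alpha> t * P_op \<gamma> \<delta> v' t\<bar>\<^sup>2) \<partial>lborel)
               \<le> ennreal c * (\<integral>\<^sup>+ t\<in>{0<..<1}. ennreal (\<bar>omega2 \<alpha> t * v' t\<bar>\<^sup>2) \<partial>lborel)"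
proof -
  note g = assms(1,2) and d = assms(3,4) and ad = assms(3,5,6)
  define G where "G = Gamma (1-\<delta>)"
  have G: "G > 0" using d unfolding G_def by (intro Gamma_real_pos) auto
  define C0 where "C0 = 1/(\<alpha>-\<delta>)/(1-\<delta>)"
  have C0: "C0 > 0" using assms by (simp add: C0_def)
  define c where "c = C0 / G^2"
  have c: "c > 0" using C0 G by (simp add: c_def)
  have main: "(\<forall>t\<in>{0<..<1}. (v has_real_derivative v' t) (at t)) \<longrightarrow>
           ((\<integral>\<^sup>+ t\<in>{0<..<1}. ennreal (\<bar>omega2 \<alpha> t * v' t\<bar>\<^sup>2) \<partial>lborel) < \<infinity> \<longrightarrow>
              (AE t in lborel. t \<in> {0<..<1} \<longrightarrow>
                 set_integrable lborel {0<..<t} (\<lambda>z. P_kernel \<gamma> \<delta> t z * v' z)))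
           \<and> (\<integral>\<^sup>+ t\<in>{0<..<1}. ennreal (\<bar>omega1 \<gamma> \<alpha> t * P_op \<gamma> \<delta> v' t\<bar>\<^sup>2) \<partial>lborel)
               \<le> ennreal c * (\<integral>\<^sup>+ t\<in>{0<..<1}. ennreal (\<bar>omega2 \<alpha> t * v' t\<bar>\<^sup>2) \<partial>lborel)"
    for v v' :: "real \<Rightarrow> real"
  proof (intro impI)
    assume D: "\<forall>t\<in>{0<..<1}. (v has_real_derivative v' t) (at t)"
    define W where "W = (\<lambda>t. indicator {0<..<1} t * v' t)"
    have Wm[measurable]: "W \<in> borel_measurable borel"
      using deriv_meas[OF D] by (simp add: W_def)
    define B where "B = (\<lambda>t::real. t powr (-(1/\<gamma>-1)*\<delta>) / G)"
    define Q where "Q = (\<lambda>t. \<integral>\<^sup>+z. ennreal (indicator {0<..<t} z * (t-z) powr (-\<delta>) * \<bar>W z\<bar>) \<partial>lborel)"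
    define RHS where "RHS = (\<integral>\<^sup>+ t\<in>{0<..<1}. ennreal (\<bar>omega2 \<alpha> t * v' t\<bar>\<^sup>2) \<partial>lborel)"
    have RHS_eq: "RHS = (\<integral>\<^sup>+z. ennreal (indicator {0<..<1} z * (1-z) powr (1-\<alpha>) * (W z)\<^sup>2) \<partial>lborel)"
      unfolding RHS_def
    proof (intro nn_integral_cong)
      fix z :: real
      show "ennreal (\<bar>omega2 \<alpha> z * v' z\<bar>\<^sup>2) * indicator {0<..<1} z = ennreal (indicator {0<..<1} z * (1-z) powr (1-\<alpha>) * (W z)\<^sup>2)"
      proof (cases "z \<in> {0<..<1}")
        case True
        have "(omega2 \<alpha> z)\<^sup>2 = (1-z) powr (1-\<alpha>)"
          using True unfolding omega2_def power2_eq_square by (simp add: powr_add[symmetric])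
        then show ?thesis using True by (simp add: W_def power_mult_distrib)
      qed (simp add: W_def)
    qed
    have Qm: "(\<lambda>t. ennreal (indicator {0<..<1} t) * Q t ^ 2) \<in> borel_measurable lborel"
    proof -
      have Qa: "Q = (\<lambda>t. \<integral>\<^sup>+z. ennreal (if 0 < z \<and> z < t then (t-z) powr (-\<delta>) * \<bar>W z\<bar> else 0) \<partial>lborel)"
        unfolding Q_def by (intro ext nn_integral_cong) (auto simp: indicator_def)
      have Fm: "case_prod (\<lambda>t z. ennreal (if 0 < z \<and> z < t then (t - z) powr (-\<delta>) * \<bar>W z\<bar> else 0)) \<in> borel_measurable (lborel \<Otimes>\<^sub>M lborel)"
        by measurable
      have "(\<lambda>t. \<integral>\<^sup>+z. ennreal (if 0 < z \<and> z < t then (t-z) powr (-\<delta>) * \<bar>W z\<bar> else 0) \<partial>lborel) \<in> borel_measurable lborel"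
        by (rule lborel.borel_measurable_nn_integral[OF Fm])
      then have [measurable]: "Q \<in> borel_measurable lborel" unfolding Qa .
      show ?thesis by measurable
    qed
    have M: "(\<integral>\<^sup>+t. ennreal (indicator {0<..<1} t) * Q t ^ 2 \<partial>lborel) \<le> ennreal C0 * RHS"
    proof -
      have "(\<integral>\<^sup>+t. ennreal (indicator {0<..<1} t) * Q t ^ 2 \<partial>lborel)
         \<le> (\<integral>\<^sup>+t. ennreal (indicator {0<..<1} t) * (\<integral>\<^sup>+z. ennreal (1/(\<alpha>-\<delta>) * (indicator {0<..<t} z * (t-z) powr (-\<delta>) * (1-z) powr (1-\<alpha>) * (W z)\<^sup>2)) \<partial>lborel) \<partial>lborel)"
      proof (intro nn_integral_mono)
        fix t :: real
        show "ennreal (indicator {0<..<1} t) * Q t ^ 2 \<le> ennreal (indicator {0<..<1} t) * (\<integral>\<^sup>+z. ennreal (1/(\<alpha>-\<delta>) * (indicator {0<..<t} z * (t-z) powr (-\<delta>) * (1-z) powr (1-\<alpha>) * (W z)\<^sup>2)) \<partial>lborel)"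
        proof (cases "t \<in> {0<..<1}")
          case True
          have "Q t ^ 2 \<le> (\<integral>\<^sup>+z. ennreal (1/(\<alpha>-\<delta>) * (indicator {0<..<t} z * (t-z) powr (-\<delta>) * (1-z) powr (1-\<alpha>) * (W z)\<^sup>2)) \<partial>lborel)"
            unfolding Q_def using True by (intro CS_step[OF Wm _ _ ad]) auto
          moreover have "indicator {0<..<1} t = (1::real)" using True by simp
          ultimately show ?thesis by (simp only: ennreal_1 mult_1)
        next
          case False
          then have "indicator {0<..<1} t = (0::real)" by simp
          then show ?thesis by (simp only: ennreal_0 mult_zero_left order_refl)
        qed
      qed
      also have "\<dots> \<le> ennreal (1/(\<alpha>-\<delta>)/(1-\<delta>)) * (\<integral>\<^sup>+z. ennreal (indicator {0<..<1} z * (1-z) powr (1-\<alpha>) * (W z)\<^sup>2) \<partial>lborel)"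
        by (rule Fub_step[OF Wm d]) (use ad in simp)
      finally show ?thesis unfolding RHS_eq C0_def .
    qed
    have NB: "(\<integral>\<^sup>+z. ennreal (norm (indicator {0<..<t} z *\<^sub>R (P_kernel \<gamma> \<delta> t z * v' z))) \<partial>lborel) \<le> ennreal (B t) * Q t"
      if t: "0 < t" "t < 1" for t
    proof -
      have "(\<integral>\<^sup>+z. ennreal (norm (indicator {0<..<t} z *\<^sub>R (P_kernel \<gamma> \<delta> t z * v' z))) \<partial>lborel)
          \<le> (\<integral>\<^sup>+z. ennreal (B t) * ennreal (indicator {0<..<t} z * (t-z) powr (-\<delta>) * \<bar>W z\<bar>) \<partial>lborel)"
      proof (intro nn_integral_mono)
        fix z :: real
        show "ennreal (norm (indicator {0<..<t} z *\<^sub>R (P_kernel \<gamma> \<delta> t z * v' z))) \<le> ennreal (B t) * ennreal (indicator {0<..<t} z * (t-z) powr (-\<delta>) * \<bar>W z\<bar>)"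
        proof (cases "z \<in> {0<..<t}")
          case True
          have kb: "0 \<le> P_kernel \<gamma> \<delta> t z \<and> P_kernel \<gamma> \<delta> t z \<le> B t * (t-z) powr (-\<delta>)"
            using kernel_bound[OF g d, of z t] True by (simp add: B_def G_def)
          have "\<bar>P_kernel \<gamma> \<delta> t z * v' z\<bar> \<le> B t * (t-z) powr (-\<delta>) * \<bar>v' z\<bar>"
            using kb by (simp add: abs_mult mult_right_mono)
          moreover have "B t \<ge> 0" using G by (simp add: B_def)
          ultimately show ?thesis using True t
            by (simp add: W_def ennreal_mult[symmetric] mult.assoc)
        qed simp
      qed
      also have "\<dots> = ennreal (B t) * Q t"
        unfolding Q_def by (rule nn_integral_cmult) measurable
      finally show ?thesis .
    qed
    have Kmeas: "(\<lambda>z. indicator {0<..<t} z *\<^sub>R (P_kernel \<gamma> \<delta> t z * v' z)) \<in> borel_measurable borel"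
      if t: "0 < t" "t < 1" for t
    proof -
      have "(\<lambda>z. indicator {0<..<t} z *\<^sub>R (P_kernel \<gamma> \<delta> t z * v' z)) = (\<lambda>z. indicator {0<..<t} z * (P_kernel \<gamma> \<delta> t z * W z))"
        using t by (auto simp: W_def indicator_def fun_eq_iff)
      also have "\<dots> \<in> borel_measurable borel"
        unfolding P_kernel_def
        by (intro borel_measurable_times borel_measurable_divide powr_real_measurable borel_measurable_diff borel_measurable_const measurable_ident_sets borel_measurable_indicator Wm) auto
      finally show ?thesis .
    qed
    have final: "(RHS < \<infinity> \<longrightarrow>
              (AE t in lborel. t \<in> {0<..<1} \<longrightarrow>
                 set_integrable lborel {0<..<t} (\<lambda>z. P_kernel \<gamma> \<delta> t z * v' z)))
           \<and> (\<integral>\<^sup>+ t\<in>{0<..<1}. ennreal (\<bar>omega1 \<gamma> \<alpha> t * P_op \<gamma> \<delta> v' t\<bar>\<^sup>2) \<partial>lborel)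
               \<le> ennreal c * RHS"
    proof (intro conjI impI)
      assume fin: "RHS < \<infinity>"
      have "(\<integral>\<^sup>+t. ennreal (indicator {0<..<1} t) * Q t ^ 2 \<partial>lborel) \<noteq> \<infinity>"
      proof -
        have "ennreal C0 * RHS < \<infinity>" using fin by (simp add: ennreal_mult_less_top)
        with M have "(\<integral>\<^sup>+t. ennreal (indicator {0<..<1} t) * Q t ^ 2 \<partial>lborel) < \<infinity>"
          by (rule le_less_trans)
        then show ?thesis by simp
      qed
      then have "AE t in lborel. ennreal (indicator {0<..<1} t) * Q t ^ 2 \<noteq> \<infinity>"
        by (intro nn_integral_PInf_AE Qm)
      then show "AE t in lborel. t \<in> {0<..<1} \<longrightarrow>
                 set_integrable lborel {0<..<t} (\<lambda>z. P_kernel \<gamma> \<delta> t z * v' z)"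
      proof eventually_elim
        case (elim t)
        show ?case
        proof
          assume t: "t \<in> {0<..<1}"
          then have "Q t ^ 2 \<noteq> \<infinity>" using elim by simp
          then have Qf: "Q t \<noteq> \<infinity>" by auto
          show "set_integrable lborel {0<..<t} (\<lambda>z. P_kernel \<gamma> \<delta> t z * v' z)"
            unfolding set_integrable_def
          proof (rule integrableI_bounded)
            show "(\<lambda>z. indicator {0<..<t} z *\<^sub>R (P_kernel \<gamma> \<delta> t z * v' z)) \<in> borel_measurable lborel"
              using Kmeas[of t] t by simp
            have "(\<integral>\<^sup>+z. ennreal (norm (indicator {0<..<t} z *\<^sub>R (P_kernel \<gamma> \<delta> t z * v' z))) \<partial>lborel) \<le> ennreal (B t) * Q t"
              using NB[of t] t by simp
            also have "\<dots> < \<infinity>" using Qf by (simp add: ennreal_mult_less_top less_top)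
            finally show "(\<integral>\<^sup>+z. ennreal (norm (indicator {0<..<t} z *\<^sub>R (P_kernel \<gamma> \<delta> t z * v' z))) \<partial>lborel) < \<infinity>" .
          qed
        qed
      qed
    next
      have pw: "ennreal (\<bar>omega1 \<gamma> \<alpha> t * P_op \<gamma> \<delta> v' t\<bar>\<^sup>2) * indicator {0<..<1} t
          \<le> ennreal (1/G^2) * (ennreal (indicator {0<..<1} t) * Q t ^ 2)" for t
      proof (cases "t \<in> {0<..<1}")
        case True
        then have t: "0 < t" "t < 1" by auto
        have Pb: "ennreal \<bar>P_op \<gamma> \<delta> v' t\<bar> \<le> ennreal (B t) * Q t"
        proof (cases "integrable lborel (\<lambda>z. indicator {0<..<t} z *\<^sub>R (P_kernel \<gamma> \<delta> t z * v' z))")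
          case True
          have "ennreal \<bar>P_op \<gamma> \<delta> v' t\<bar> = ennreal (norm (integral\<^sup>L lborel (\<lambda>z. indicator {0<..<t} z *\<^sub>R (P_kernel \<gamma> \<delta> t z * v' z))))"
            by (simp add: P_op_def set_lebesgue_integral_def)
          also have "\<dots> \<le> (\<integral>\<^sup>+z. ennreal (norm (indicator {0<..<t} z *\<^sub>R (P_kernel \<gamma> \<delta> t z * v' z))) \<partial>lborel)"
            by (rule integral_norm_bound_ennreal[OF True])
          also have "\<dots> \<le> ennreal (B t) * Q t" by (rule NB[OF t])
          finally show ?thesis .
        next
          case False
          then have "P_op \<gamma> \<delta> v' t = 0"
            by (simp add: P_op_def set_lebesgue_integral_def not_integrable_integral_eq)
          then show ?thesis by simp
        qed
        have om: "0 \<le> omega1 \<gamma> \<alpha> t" unfolding omega1_def by simp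
        have ob: "omega1 \<gamma> \<alpha> t * B t \<le> 1/G"
          using omega_bound[OF g d _ t] ad G by (simp add: B_def divide_right_mono)
        have "ennreal (\<bar>omega1 \<gamma> \<alpha> t * P_op \<gamma> \<delta> v' t\<bar>\<^sup>2) = (ennreal (omega1 \<gamma> \<alpha> t) * ennreal \<bar>P_op \<gamma> \<delta> v' t\<bar>)^2"
          using om by (simp add: abs_mult ennreal_mult[symmetric] ennreal_power)
        also have "\<dots> \<le> (ennreal (omega1 \<gamma> \<alpha> t) * (ennreal (B t) * Q t))^2"
          by (intro power_mono mult_left_mono Pb) auto
        also have "\<dots> = (ennreal (omega1 \<gamma> \<alpha> t * B t) * Q t)^2"
        proof -
          have Bn: "B t \<ge> 0" using G by (simp add: B_def)
          have "ennreal (omega1 \<gamma> \<alpha> t * B t) = ennreal (omega1 \<gamma> \<alpha> t) * ennreal (B t)"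
            using om Bn by (rule ennreal_mult)
          then show ?thesis by (simp add: mult.assoc)
        qed
        also have "\<dots> \<le> (ennreal (1/G) * Q t)^2"
          using ob by (intro power_mono mult_right_mono ennreal_leI) auto
        also have "\<dots> = ennreal (1/G^2) * Q t ^ 2"
          using G by (simp add: power_mult_distrib ennreal_power power_divide)
        finally show ?thesis using True by simp
      qed simp
      have "(\<integral>\<^sup>+ t\<in>{0<..<1}. ennreal (\<bar>omega1 \<gamma> \<alpha> t * P_op \<gamma> \<delta> v' t\<bar>\<^sup>2) \<partial>lborel)
          \<le> (\<integral>\<^sup>+t. ennreal (1/G^2) * (ennreal (indicator {0<..<1} t) * Q t ^ 2) \<partial>lborel)"
        by (intro nn_integral_mono pw)
      also have "\<dots> = ennreal (1/G^2) * (\<integral>\<^sup>+t. ennreal (indicator {0<..<1} t) * Q t ^ 2 \<partial>lborel)"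
        by (rule nn_integral_cmult[OF Qm])
      also have "\<dots> \<le> ennreal (1/G^2) * (ennreal C0 * RHS)"
        by (intro mult_left_mono M) auto
      also have "\<dots> = ennreal c * RHS"
        using G C0 by (simp add: c_def ennreal_mult[symmetric] mult.assoc[symmetric])
      finally show "(\<integral>\<^sup>+ t\<in>{0<..<1}. ennreal (\<bar>omega1 \<gamma> \<alpha> t * P_op \<gamma> \<delta> v' t\<bar>\<^sup>2) \<partial>lborel) \<le> ennreal c * RHS" .
    qed
    then show "((\<integral>\<^sup>+ t\<in>{0<..<1}. ennreal (\<bar>omega2 \<alpha> t * v' t\<bar>\<^sup>2) \<partial>lborel) < \<infinity> \<longrightarrow>
              (AE t in lborel. t \<in> {0<..<1} \<longrightarrow>
                 set_integrable lborel {0<..<t} (\<lambda>z. P_kernel \<gamma> \<delta> t z * v' z)))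
           \<and> (\<integral>\<^sup>+ t\<in>{0<..<1}. ennreal (\<bar>omega1 \<gamma> \<alpha> t * P_op \<gamma> \<delta> v' t\<bar>\<^sup>2) \<partial>lborel)
               \<le> ennreal c * (\<integral>\<^sup>+ t\<in>{0<..<1}. ennreal (\<bar>omega2 \<alpha> t * v' t\<bar>\<^sup>2) \<partial>lborel)"
      unfolding RHS_def .
  qed
  show ?thesis using c main by blast
qed

end
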